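(* Let $S$ be a qubit with Hamiltonian $H_S=E|1\rangle\langle 1|$, $E>0$, and let $\beta>0$. Assume the initial state of $S$ is diagonal in the energy eigenbasis with $p^{(0)}_0\ge p^{(0)}_1$. Then the optimal cooling protocol in $\mathcal{P}_\emptyset$ (maximizing the ground state population $p_0^{(k)}$ after every number $k$ of rounds) is the one in which in each round (1) the Pauli $X$ unitary is applied to $S$ and (2) the $\beta$-swap $\Lambda_\beta$ is applied to $S$. The ground state population after round $k$ is $p^{(k)}_0=1-e^{-k\beta E}(1-p^{(0)}_0)$, and $p^{(k)}_0\to1$ as $k\to\infty$.
   Context: A dephasing thermalization on $S$ is a quantum channel $\Lambda$ with $\Lambda(\tau_S)=\tau_S$, where $\tau_S=e^{-\beta H_S}/\mathrm{tr}[e^{-\beta H_S}]$, and $\langle 0|\Lambda(\rho)|1\rangle=0$ for all $\rho$. The protocol class $\mathcal{P}_\emptyset$ (no auxiliary systems): each round $k$ consists of an arbitrary unitary $U^{(k)}$ applied to $S$ followed by an arbitrary dephasing thermalization $\Lambda^{(k)}$ applied to $S$, so $\rho_S^{(k)}=\Lambda^{(k)}(U^{(k)}\rho_S^{(k-1)}U^{(k)\dagger})$; $p_0^{(k)}=\langle0|\rho_S^{(k)}|0\rangle$. The $\beta$-swap is the channel $\Lambda_\beta(\rho)=\sigma_-\rho\sigma_++e^{-\beta E}\sigma_+\rho\sigma_-+(1-e^{-\beta E})\sigma_-\sigma_+\rho\sigma_-\sigma_+$ with $\sigma_+=|1\rangle\langle0|$, $\sigma_-=|0\rangle\langle 1|$;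 it satisfies $\langle0|\Lambda_\beta(|1\rangle\langle1|)|0\rangle=1$ and $\langle1|\Lambda_\beta(|0\rangle\langle0|)|1\rangle=e^{-\beta E}$. *)

theory Defs
  imports "HOL-Analysis.Analysis"
begin

text \<open>Qubit operators are 2x2 complex matrices of type complex^2^2.
  The energy eigenbasis: index 1 is the ground state |0>, index 2 is the excited state |1>.\<close>

type_synonym qop = "complex^2^2"

definition adj :: "qop \<Rightarrow> qop" where
  "adj A = (\<chi> i j. cnj (A $ j $ i))"

definition unitary_op :: "qop \<Rightarrow> bool" where
  "unitary_op U \<longleftrightarrow> adj U ** U = mat 1 \<and> U ** adj U = mat 1"

definition trace_op :: "qop \<Rightarrow> complex" where
  "trace_op A = (\<Sum>i\<in>UNIV. A $ i $ i)"

definition density :: "qop \<Rightarrow> bool" where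
  "density \<rho> \<longleftrightarrow>
     (\<forall>v::complex^2. Im (\<Sum>i\<in>UNIV. cnj (v $ i) * (\<rho> *v v) $ i) = 0 \<and>
                      Re (\<Sum>i\<in>UNIV. cnj (v $ i) * (\<rho> *v v) $ i) \<ge> 0)
     \<and> trace_op \<rho> = 1"

definition quantum_channel :: "(qop \<Rightarrow> qop) \<Rightarrow> bool" where
  "quantum_channel \<Lambda> \<longleftrightarrow>
     (\<exists>Ks::qop list. (\<forall>\<rho>. \<Lambda> \<rho> = sum_list (map (\<lambda>K. K ** \<rho> ** adj K) Ks)) \<and>
                     sum_list (map (\<lambda>K. adj K ** K) Ks) = mat 1)"

definition gibbs :: "real \<Rightarrow> real \<Rightarrow> qop" where
  "gibbs \<beta> E = (\<chi> i j. if i = j then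
       complex_of_real ((if i = 1 then 1 else exp (- \<beta> * E)) / (1 + exp (- \<beta> * E)))
     else 0)"

definition dephasing_thermalization :: "real \<Rightarrow> real \<Rightarrow> (qop \<Rightarrow> qop) \<Rightarrow> bool" where
  "dephasing_thermalization \<beta> E \<Lambda> \<longleftrightarrow>
     quantum_channel \<Lambda> \<and> \<Lambda> (gibbs \<beta> E) = gibbs \<beta> E \<and>
     (\<forall>\<rho>. density \<rho> \<longrightarrow> \<Lambda> \<rho> $ 1 $ 2 = 0)"

text \<open>sigma_plus = |1><0|, sigma_minus = |0><1|.\<close>
definition sigma_plus :: qop where
  "sigma_plus = (\<chi> i j. if i = 2 \<and> j = 1 then 1 else 0)"

definition sigma_minus :: qop where
  "sigma_minus = (\<chi> i j. if i = 1 \<and> j = 2 then 1 else 0)"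

definition beta_swap :: "real \<Rightarrow> real \<Rightarrow> qop \<Rightarrow> qop" where
  "beta_swap \<beta> E \<rho> =
     sigma_minus ** \<rho> ** sigma_plus
     + exp (- \<beta> * E) *\<^sub>R (sigma_plus ** \<rho> ** sigma_minus)
     + (1 - exp (- \<beta> * E)) *\<^sub>R
         ((sigma_minus ** sigma_plus) ** \<rho> ** (sigma_minus ** sigma_plus))"

definition pauliX :: qop where
  "pauliX = (\<chi> i j. if i \<noteq> j then 1 else 0)"

text \<open>State after k rounds of a protocol in P_empty: round j (j \<ge> 1) applies
  unitary U j and then channel L j.\<close>
primrec state :: "(nat \<Rightarrow> qop) \<Rightarrow> (nat \<Rightarrow> qop \<Rightarrow> qop) \<Rightarrow> qop \<Rightarrow> nat \<Rightarrow> qop" where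
  "state U L \<rho>0 0 = \<rho>0"
| "state U L \<rho>0 (Suc k) = L (Suc k) (U (Suc k) ** state U L \<rho>0 k ** adj (U (Suc k)))"

definition p0 :: "qop \<Rightarrow> real" where
  "p0 \<rho> = Re (\<rho> $ 1 $ 1)"

end

theory Submission imports Defs begin

lemmas ent = vec_eq_iff forall_2 sum_2 matrix_matrix_mult_def matrix_vector_mult_def adj_def trace_op_def mat_def

definition qf :: "qop \<Rightarrow> complex^2 \<Rightarrow> complex" where
  "qf X v = (\<Sum>i\<in>UNIV. cnj (v $ i) * (X *v v) $ i)"

definition psd :: "qop \<Rightarrow> bool" where
  "psd X \<longleftrightarrow> (\<forall>v. Im (qf X v) = 0 \<and> Re (qf X v) \<ge> 0)"

lemma density_psd: "density \<rho> \<longleftrightarrow> psd \<rho> \<and> trace_op \<rho> = 1"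
  unfolding density_def psd_def qf_def by simp

lemma qf_add: "qf (A + B) v = qf A v + qf B v"
  by (simp add: qf_def ent algebra_simps)

lemma qf_scaleR: "qf (c *\<^sub>R A) v = complex_of_real c * qf A v"
  by (simp add: qf_def ent algebra_simps) (simp add: scaleR_conv_of_real algebra_simps)

lemma psd_add: "psd A \<Longrightarrow> psd B \<Longrightarrow> psd (A + B)"
  by (simp add: psd_def qf_add)

lemma psd_scaleR: "psd A \<Longrightarrow> c \<ge> 0 \<Longrightarrow> psd (c *\<^sub>R A)"
  by (simp add: psd_def qf_scaleR)

lemma psd_zero: "psd 0"
  by (simp add: psd_def qf_def ent)

lemma qf_conj: "qf (K ** X ** adj K) v = qf X (adj K *v v)"
  by (simp add: qf_def ent algebra_simps)

lemma psd_conj: "psd X \<Longrightarrow> psd (K ** X ** adj K)"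
  by (simp add: psd_def qf_conj)

lemma trace_add: "trace_op (A + B) = trace_op A + trace_op B"
  by (simp add: ent)

lemma trace_conj: "trace_op (K ** X ** adj K) = trace_op ((adj K ** K) ** X)"
  by (simp add: ent algebra_simps)

definition kr :: "qop list \<Rightarrow> qop \<Rightarrow> qop" where
  "kr Ks X = sum_list (map (\<lambda>K. K ** X ** adj K) Ks)"

lemma kr_add: "kr Ks (A + B) = kr Ks A + kr Ks B"
proof (induction Ks)
  case Nil then show ?case by (simp add: kr_def)
next
  case (Cons K Ks)
  have "K ** (A + B) ** adj K = K ** A ** adj K + K ** B ** adj K"
    by (simp add: ent algebra_simps)
  then show ?case using Cons by (simp add: kr_def algebra_simps)
qed

lemma kr_scaleR: "kr Ks (c *\<^sub>R A) = c *\<^sub>R kr Ks A"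
proof (induction Ks)
  case Nil then show ?case by (simp add: kr_def)
next
  case (Cons K Ks)
  have "K ** (c *\<^sub>R A) ** adj K = c *\<^sub>R (K ** A ** adj K)"
    by (simp add: ent algebra_simps)
  then show ?case using Cons by (simp add: kr_def algebra_simps)
qed

lemma kr_psd: "psd A \<Longrightarrow> psd (kr Ks A)"
proof (induction Ks)
  case Nil then show ?case by (simp add: kr_def psd_zero)
next
  case (Cons K Ks)
  then show ?case by (simp add: kr_def psd_add psd_conj)
qed

lemma kr_trace: "trace_op (kr Ks X) = trace_op (sum_list (map (\<lambda>K. adj K ** K) Ks) ** X)"
proof (induction Ks)
  case Nil then show ?case by (simp add: kr_def ent)
next
  case (Cons K Ks)
  have "trace_op ((adj K ** K + sum_list (map (\<lambda>K. adj K ** K) Ks)) ** X)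
     = trace_op ((adj K ** K) ** X) + trace_op (sum_list (map (\<lambda>K. adj K ** K) Ks) ** X)"
    by (simp add: ent algebra_simps)
  then show ?case using Cons by (simp add: kr_def trace_add trace_conj)
qed

lemma channel_props:
  assumes "quantum_channel L"
  shows "\<And>A B. L (A + B) = L A + L B" "\<And>c A. L (c *\<^sub>R A) = c *\<^sub>R L A"
    "\<And>A. psd A \<Longrightarrow> psd (L A)" "\<And>A. trace_op (L A) = trace_op A"
proof -
  obtain Ks where L: "\<And>\<rho>. L \<rho> = kr Ks \<rho>" and S: "sum_list (map (\<lambda>K. adj K ** K) Ks) = mat 1"
    using assms unfolding quantum_channel_def kr_def by blast
  show "\<And>A B. L (A + B) = L A + L B" by (simp add: L kr_add)
  show "\<And>c A. L (c *\<^sub>R A) = c *\<^sub>R L A" by (simp add: L kr_scaleR)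
  show "\<And>A. psd A \<Longrightarrow> psd (L A)" by (simp add: L kr_psd)
  show "\<And>A. trace_op (L A) = trace_op A" by (simp add: L kr_trace S)
qed

definition P0 :: qop where "P0 = (\<chi> i j. if i = 1 \<and> j = 1 then 1 else 0)"
definition P1 :: qop where "P1 = (\<chi> i j. if i = 2 \<and> j = 2 then 1 else 0)"

lemma psd_P0: "psd P0"
  by (simp add: psd_def qf_def ent P0_def complex_mult_cnj mult.commute[of "cnj _"])

lemma psd_P1: "psd P1"
  by (simp add: psd_def qf_def ent P1_def complex_mult_cnj mult.commute[of "cnj _"])

lemma mat1_P: "(mat 1 :: qop) = P0 + P1"
  by (simp add: ent P0_def P1_def)

lemma gibbs_P: "gibbs \<beta> E = (1 / (1 + exp (- \<beta> * E))) *\<^sub>R (P0 + exp (- \<beta> * E) *\<^sub>R P1)"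
  by (simp add: ent P0_def P1_def gibbs_def) (simp add: scaleR_conv_of_real)

lemma step:
  assumes L: "dephasing_thermalization \<beta> E L" and U: "unitary_op U"
    and e: "e = exp (- \<beta> * E)" "e \<le> 1"
    and d: "density \<sigma>" and p: "psd (\<sigma> - lam *\<^sub>R mat 1)" and l: "lam \<ge> 0"
  shows "density (L (U ** \<sigma> ** adj U)) \<and> psd (L (U ** \<sigma> ** adj U) - (e * lam) *\<^sub>R mat 1)"
proof -
  have ch: "quantum_channel L" and g: "L (gibbs \<beta> E) = gibbs \<beta> E"
    using L by (auto simp: dephasing_thermalization_def)
  note cp = channel_props[OF ch]
  have ep: "e > 0" using e by simp
  define \<tau> where "\<tau> = U ** \<sigma> ** adj U"
  have UU: "U ** adj U = mat 1" "adj U ** U = mat 1" using U by (auto simp: unitary_op_def)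
  have "U ** (\<sigma> - lam *\<^sub>R mat 1) ** adj U = \<tau> - lam *\<^sub>R (U ** adj U)"
    unfolding \<tau>_def by (simp add: ent algebra_simps)
  then have t1: "psd (\<tau> - lam *\<^sub>R mat 1)" using psd_conj[OF p, of U] UU by simp
  have dsig: "psd \<sigma>" "trace_op \<sigma> = 1" using d by (auto simp: density_psd)
  have "trace_op \<tau> = 1" unfolding \<tau>_def trace_conj UU using dsig by simp
  with psd_conj[OF dsig(1), of U] have dt: "density \<tau>" by (simp add: density_psd \<tau>_def)
  have dL: "density (L \<tau>)" using dt cp by (simp add: density_psd)
  define Y where "Y = P0 + e *\<^sub>R P1"
  have "(1 / (1 + e)) *\<^sub>R L Y = (1 / (1 + e)) *\<^sub>R Y"
    using g unfolding gibbs_P e(1)[symmetric] Y_def[symmetric] cp(2) .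
  then have LY: "L Y = Y" using ep by simp
  then have LP0: "L P0 = P0 + e *\<^sub>R P1 - e *\<^sub>R L P1"
    unfolding Y_def cp(1) cp(2) by (simp add: algebra_simps)
  have tdec: "\<tau> = (\<tau> - lam *\<^sub>R mat 1) + lam *\<^sub>R P0 + lam *\<^sub>R P1"
    by (simp add: mat1_P algebra_simps)
  have "L \<tau> = L (\<tau> - lam *\<^sub>R mat 1) + lam *\<^sub>R L P0 + lam *\<^sub>R L P1"
    by (subst tdec) (simp only: cp(1) cp(2))
  then have "L \<tau> - (e * lam) *\<^sub>R mat 1 = L (\<tau> - lam *\<^sub>R mat 1) + (lam * (1 - e)) *\<^sub>R (P0 + L P1)"
    unfolding LP0 mat1_P by (simp add: algebra_simps)
  moreover have "psd (L (\<tau> - lam *\<^sub>R mat 1) + (lam * (1 - e)) *\<^sub>R (P0 + L P1))"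
    using t1 cp(3) psd_P0 psd_P1 l e(2) by (intro psd_add psd_scaleR) auto
  ultimately show ?thesis using dL unfolding \<tau>_def by simp
qed

lemma final_bound:
  assumes "density \<sigma>" "psd (\<sigma> - \<mu> *\<^sub>R mat 1)"
  shows "p0 \<sigma> \<le> 1 - \<mu>"
proof -
  define v :: "complex^2" where "v = (\<chi> i. if i = 2 then 1 else 0)"
  have "Re (qf (\<sigma> - \<mu> *\<^sub>R mat 1) v) \<ge> 0" using assms(2) by (simp add: psd_def)
  then have "Re (\<sigma> $ 2 $ 2) \<ge> \<mu>" by (simp add: qf_def ent v_def)
  moreover have "\<sigma> $ 1 $ 1 + \<sigma> $ 2 $ 2 = 1" using assms(1) by (simp add: density_psd ent)
  then have "Re (\<sigma> $ 1 $ 1) + Re (\<sigma> $ 2 $ 2) = 1" by (metis one_complex.simps(1) plus_complex.simps(1))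
  ultimately show ?thesis by (simp add: p0_def)
qed

lemma pauliX_unitary: "unitary_op pauliX"
  by (simp add: unitary_op_def ent pauliX_def)

lemma bs_entries:
  "beta_swap \<beta> E \<rho> $ 1 $ 1 = \<rho> $ 2 $ 2 + complex_of_real (1 - exp (- \<beta> * E)) * \<rho> $ 1 $ 1"
  "beta_swap \<beta> E \<rho> $ 2 $ 2 = complex_of_real (exp (- \<beta> * E)) * \<rho> $ 1 $ 1"
  "beta_swap \<beta> E \<rho> $ 1 $ 2 = 0"
  "beta_swap \<beta> E \<rho> $ 2 $ 1 = 0"
  by (simp_all add: beta_swap_def ent sigma_plus_def sigma_minus_def) (simp_all add: scaleR_conv_of_real del: of_real_exp)

lemma bs_dt:
  assumes "exp (- \<beta> * E) \<le> 1"
  shows "dephasing_thermalization \<beta> E (beta_swap \<beta> E)"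
proof -
  define e where "e = exp (- \<beta> * E)"
  have e0: "e > 0" "e \<le> 1" using assms by (auto simp: e_def)
  define Ks where "Ks = [sigma_minus, sqrt e *\<^sub>R sigma_plus, sqrt (1 - e) *\<^sub>R (sigma_minus ** sigma_plus)]"
  have adjm: "adj sigma_minus = sigma_plus" "adj sigma_plus = sigma_minus"
    "adj (sigma_minus ** sigma_plus) = sigma_minus ** sigma_plus"
    by (simp_all add: ent sigma_plus_def sigma_minus_def)
  have cs: "\<And>c K X. (c *\<^sub>R K) ** X ** adj (c *\<^sub>R K) = (c * c) *\<^sub>R (K ** X ** adj K)"
    by (simp add: ent algebra_simps)
  have K1: "\<forall>\<rho>. beta_swap \<beta> E \<rho> = sum_list (map (\<lambda>K. K ** \<rho> ** adj K) Ks)"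
    using e0 by (simp add: Ks_def cs adjm beta_swap_def e_def add.assoc)
  have cs2: "\<And>c K. adj (c *\<^sub>R K) ** (c *\<^sub>R K) = (c * c) *\<^sub>R (adj K ** K)"
    by (simp add: ent algebra_simps)
  have pp: "sigma_plus ** sigma_minus = P1" "sigma_minus ** sigma_plus = P0"
    "P0 ** P0 = P0" "adj P0 = P0"
    by (simp_all add: ent sigma_plus_def sigma_minus_def P0_def P1_def)
  have "sum_list (map (\<lambda>K. adj K ** K) Ks) = P1 + (e *\<^sub>R P0 + (1 - e) *\<^sub>R P0)"
    using e0 by (simp add: Ks_def cs2 adjm pp)
  also have "... = mat 1" by (simp add: mat1_P algebra_simps)
  finally have K2: "sum_list (map (\<lambda>K. adj K ** K) Ks) = mat 1" .
  have "quantum_channel (beta_swap \<beta> E)" using K1 K2 unfolding quantum_channel_def by blast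
  moreover have "beta_swap \<beta> E (gibbs \<beta> E) = gibbs \<beta> E"
  proof -
    have r: "e / (1 + e) + (1 - e) * (1 / (1 + e)) = 1 / (1 + e)"
      using e0 by (simp add: field_simps)
    have "complex_of_real (e / (1 + e)) + complex_of_real (1 - e) * complex_of_real (1 / (1 + e))
        = complex_of_real (1 / (1 + e))"
      by (metis r of_real_add of_real_mult)
    moreover have "complex_of_real e * complex_of_real (1 / (1 + e)) = complex_of_real (e / (1 + e))"
      by (metis of_real_mult times_divide_eq_right mult_1_right)
    ultimately show ?thesis unfolding e_def
      by (simp add: vec_eq_iff forall_2 bs_entries gibbs_def del: of_real_exp of_real_diff of_real_divide of_real_add of_real_mult)
  qed
  ultimately show ?thesis by (simp add: dephasing_thermalization_def bs_entries)
qed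

lemma X_entries: "(pauliX ** \<rho> ** adj pauliX) $ 1 $ 1 = \<rho> $ 2 $ 2"
   "(pauliX ** \<rho> ** adj pauliX) $ 2 $ 2 = \<rho> $ 1 $ 1"
  by (simp_all add: ent pauliX_def)

lemma X_state:
  assumes "\<rho>0 $ 1 $ 1 + \<rho>0 $ 2 $ 2 = 1"
  shows "state (\<lambda>_. pauliX) (\<lambda>_. beta_swap \<beta> E) \<rho>0 k $ 2 $ 2
           = complex_of_real (exp (- \<beta> * E) ^ k) * \<rho>0 $ 2 $ 2
       \<and> state (\<lambda>_. pauliX) (\<lambda>_. beta_swap \<beta> E) \<rho>0 k $ 1 $ 1
         + state (\<lambda>_. pauliX) (\<lambda>_. beta_swap \<beta> E) \<rho>0 k $ 2 $ 2 = 1"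
proof (induction k)
  case 0 then show ?case using assms by simp
next
  case (Suc k)
  then have a: "state (\<lambda>_. pauliX) (\<lambda>_. beta_swap \<beta> E) \<rho>0 k $ 2 $ 2
           = complex_of_real (exp (- \<beta> * E) ^ k) * \<rho>0 $ 2 $ 2"
     and b: "state (\<lambda>_. pauliX) (\<lambda>_. beta_swap \<beta> E) \<rho>0 k $ 1 $ 1
         + state (\<lambda>_. pauliX) (\<lambda>_. beta_swap \<beta> E) \<rho>0 k $ 2 $ 2 = 1" by auto
  show ?case
    using b by (simp add: bs_entries X_entries a algebra_simps del: of_real_exp)
qed

lemma diag_real:
  assumes "psd \<rho>"
  shows "Im (\<rho> $ 1 $ 1) = 0" "Im (\<rho> $ 2 $ 2) = 0" "Re (\<rho> $ 2 $ 2) \<ge> 0"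
proof -
  define v1 :: "complex^2" where "v1 = (\<chi> i. if i = 1 then 1 else 0)"
  define v2 :: "complex^2" where "v2 = (\<chi> i. if i = 2 then 1 else 0)"
  have "qf \<rho> v1 = \<rho> $ 1 $ 1" "qf \<rho> v2 = \<rho> $ 2 $ 2" by (simp_all add: qf_def ent v1_def v2_def)
  then show "Im (\<rho> $ 1 $ 1) = 0" "Im (\<rho> $ 2 $ 2) = 0" "Re (\<rho> $ 2 $ 2) \<ge> 0"
    using assms unfolding psd_def by metis+
qed

theorem corollary1:
  fixes E \<beta> :: real and \<rho>0 :: qop
  assumes "E > 0" and "\<beta> > 0"
    and "density \<rho>0"
    and "\<rho>0 $ 1 $ 2 = 0" and "\<rho>0 $ 2 $ 1 = 0"
    and "Re (\<rho>0 $ 1 $ 1) \<ge> Re (\<rho>0 $ 2 $ 2)"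
  shows "unitary_op pauliX \<and> dephasing_thermalization \<beta> E (beta_swap \<beta> E)
    \<and> (\<forall>(U::nat \<Rightarrow> qop) (L::nat \<Rightarrow> qop \<Rightarrow> qop) k.
          (\<forall>j. unitary_op (U j) \<and> dephasing_thermalization \<beta> E (L j)) \<longrightarrow>
          p0 (state U L \<rho>0 k) \<le> p0 (state (\<lambda>_. pauliX) (\<lambda>_. beta_swap \<beta> E) \<rho>0 k))
    \<and> (\<forall>k. p0 (state (\<lambda>_. pauliX) (\<lambda>_. beta_swap \<beta> E) \<rho>0 k)
            = 1 - exp (- real k * \<beta> * E) * (1 - p0 \<rho>0))
    \<and> (\<lambda>k. p0 (state (\<lambda>_. pauliX) (\<lambda>_. beta_swap \<beta> E) \<rho>0 k)) \<longlonglongrightarrow> 1"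
proof -
  define e where "e = exp (- \<beta> * E)"
  have e0: "e > 0" "e < 1" using assms(1,2) by (auto simp: e_def)
  have dr: "psd \<rho>0" "trace_op \<rho>0 = 1" using assms(3) by (auto simp: density_psd)
  have tr: "\<rho>0 $ 1 $ 1 + \<rho>0 $ 2 $ 2 = 1" using dr(2) by (simp add: ent)
  note im = diag_real[OF dr(1)]
  define \<mu> where "\<mu> = Re (\<rho>0 $ 2 $ 2)"
  have mu: "\<mu> = 1 - p0 \<rho>0" "\<mu> \<ge> 0"
    using tr im unfolding \<mu>_def p0_def by (auto simp: complex_eq_iff)
  have ee: "\<And>k. exp (- real k * \<beta> * E) = e ^ k"
    unfolding e_def by (metis exp_of_nat_mult mult.assoc mult_minus_left mult_minus_right)
  have formula: "\<forall>k. p0 (state (\<lambda>_. pauliX) (\<lambda>_. beta_swap \<beta> E) \<rho>0 k)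
            = 1 - exp (- real k * \<beta> * E) * (1 - p0 \<rho>0)"
  proof
    fix k
    note X = X_state[OF tr, of \<beta> E k]
    have "state (\<lambda>_. pauliX) (\<lambda>_. beta_swap \<beta> E) \<rho>0 k $ 1 $ 1 = 1 - complex_of_real (e ^ k) * \<rho>0 $ 2 $ 2"
    proof -
      have "state (\<lambda>_. pauliX) (\<lambda>_. beta_swap \<beta> E) \<rho>0 k $ 1 $ 1 = 1 - state (\<lambda>_. pauliX) (\<lambda>_. beta_swap \<beta> E) \<rho>0 k $ 2 $ 2"
        using X[THEN conjunct2] by (simp add: eq_diff_eq)
      also have "... = 1 - complex_of_real (e ^ k) * \<rho>0 $ 2 $ 2"
        using X[THEN conjunct1] unfolding e_def by (simp only:)
      finally show ?thesis .
    qed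
    then show "p0 (state (\<lambda>_. pauliX) (\<lambda>_. beta_swap \<beta> E) \<rho>0 k)
            = 1 - exp (- real k * \<beta> * E) * (1 - p0 \<rho>0)"
      using mu(1) unfolding ee \<mu>_def p0_def by simp
  qed
  have opt: "\<forall>(U::nat \<Rightarrow> qop) (L::nat \<Rightarrow> qop \<Rightarrow> qop) k.
          (\<forall>j. unitary_op (U j) \<and> dephasing_thermalization \<beta> E (L j)) \<longrightarrow>
          p0 (state U L \<rho>0 k) \<le> p0 (state (\<lambda>_. pauliX) (\<lambda>_. beta_swap \<beta> E) \<rho>0 k)"
  proof (intro allI impI)
    fix U :: "nat \<Rightarrow> qop" and L :: "nat \<Rightarrow> qop \<Rightarrow> qop" and k
    assume UL: "\<forall>j. unitary_op (U j) \<and> dephasing_thermalization \<beta> E (L j)"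
    have inv: "density (state U L \<rho>0 n) \<and> psd (state U L \<rho>0 n - (e ^ n * \<mu>) *\<^sub>R mat 1)" for n
    proof (induction n)
      case 0
      have "\<rho>0 - \<mu> *\<^sub>R mat 1 = (Re (\<rho>0 $ 1 $ 1) - \<mu>) *\<^sub>R P0"
        using im assms(4,5) unfolding \<mu>_def
        by (simp add: ent P0_def complex_eq_iff)
      moreover have "Re (\<rho>0 $ 1 $ 1) - \<mu> \<ge> 0" using assms(6) \<mu>_def by simp
      ultimately show ?case using assms(3) psd_P0 psd_scaleR by simp
    next
      case (Suc n)
      have "e ^ n * \<mu> \<ge> 0" using e0 mu by simp
      from step[of \<beta> E "L (Suc n)" "U (Suc n)" e, OF _ _ e_def _ _ _ this] Suc UL e0
      show ?case by (simp add: mult.assoc)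
    qed
    have "p0 (state U L \<rho>0 k) \<le> 1 - e ^ k * \<mu>" using final_bound inv by blast
    then show "p0 (state U L \<rho>0 k) \<le> p0 (state (\<lambda>_. pauliX) (\<lambda>_. beta_swap \<beta> E) \<rho>0 k)"
      using formula ee mu by simp
  qed
  have lim: "(\<lambda>k. p0 (state (\<lambda>_. pauliX) (\<lambda>_. beta_swap \<beta> E) \<rho>0 k)) \<longlonglongrightarrow> 1"
  proof -
    have "(\<lambda>k. e ^ k) \<longlonglongrightarrow> 0" using e0 by (intro LIMSEQ_realpow_zero) auto
    then have "(\<lambda>k. 1 - e ^ k * (1 - p0 \<rho>0)) \<longlonglongrightarrow> 1 - 0 * (1 - p0 \<rho>0)"
      by (intro tendsto_diff[OF tendsto_const] tendsto_mult[OF _ tendsto_const])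
    then show ?thesis using formula ee by simp
  qed
  show ?thesis
    using pauliX_unitary bs_dt[of \<beta> E] e0 opt formula lim unfolding e_def by simp
qed

end
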